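(* Let $h$ be an integer with $1\le h\le u$. Then $\beta$ is a root of $S(X)$ of multiplicity at least $2^h$ if and only if, for every $i\in\{0,1,\dots,2^h-1\}$, \[ \sum_{j=0}^{2^h-1}\zeta_{2^h}^{-ij}\,\eta_{j/2^h}(-1)\,K\big(\eta_{j/2^h}\chi\big)\equiv -2^h\delta_i \pmod{2^{h+1}\mathcal{P}\,\mathbb{Z}[\zeta_{2^hk}]}, \] where $\delta_i=1$ if $T/2\equiv i\pmod{2^h}$ and $\delta_i=0$ otherwise. Equivalently, $C\,v\equiv-2^h(\delta_0,\dots,\delta_{2^h-1})^{\top}$ componentwise, where $C=(\zeta_{2^h}^{-ij})_{0\le i,j\le 2^h-1}$ and $v=\big(\eta_{j/2^h}(-1)K(\eta_{j/2^h}\chi)\big)_{0\le j\le 2^h-1}$.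
   Context: Let $p$ be an odd prime, $m\ge1$, $q=p^m$, $\alpha$ a primitive element of $\mathbb{F}_q$, and $T=q-1$; write $T=2^uT'$ with $u\ge1$ and $T'$ odd. The binary SLCE sequence $(s_n)_{n\ge0}$ is defined as follows: $s_n=1$ if $\alpha^n+1$ is a nonzero non-square of $\mathbb{F}_q$, and $s_n=0$ otherwise. Put $S(X)=\sum_{n=0}^{T-1}s_nX^n\in\mathbb{F}_2[X]$. Multiplicities of roots are taken in $\overline{\mathbb{F}_2}[X]$. Let $\beta$ be an element of an algebraic closure of $\mathbb{F}_2$ with $\beta^T=1$ and multiplicative order $k>1$ (so $k$ is odd). Let $f$ be the order of $2$ modulo $k$, and write $\zeta_N=e^{2\pi i/N}$. Let $\mathcal{P}$ be a prime ideal of $\mathbb{Z}[\zeta_k]$ containing $2$. Fix a field isomorphism $\phi:\mathbb{F}_2(\beta)=\mathbb{F}_{2^f}\to\mathbb{Z}[\zeta_k]/\mathcal{P}$, and let $\zeta$ be the unique complex $k$-th root of unity with $\phi(\beta)=\zeta+\mathcal{P}$. Multiplicative characters of $\mathbb{F}_q$ are homomorphisms $\mathbb{F}_q^*\to\mathbb{C}^*$, extended by value $0$ at $0$. For a rational $j$ with $(q-1)j\in\mathbb{Z}$, $\eta_j$ is the character with $\eta_j(\alpha)=e^{2\pi ij}$. Let $\rho=\eta_{1/2}$ be the quadratic character. Let $\chi$ be the character with $\chi(\alpha^n)=\zeta^n$. For a character $\psi$, set $K(\psi)=\sum_{x\in\mathbb{F}_q}\rho(x)\psi(1-x)$. For an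 ideal $I$ of $\mathbb{Z}[\zeta_k]$, $I\,\mathbb{Z}[\zeta_{2^hk}]$ is the ideal it generates in $\mathbb{Z}[\zeta_{2^hk}]$. *)

theory Defs
  imports "HOL-Analysis.Analysis" "HOL-Computational_Algebra.Polynomial"
begin

definition zeta :: "nat \<Rightarrow> complex" where
  "zeta N = cis (2 * pi / real N)"

definition Zring :: "nat \<Rightarrow> complex set" where
  "Zring N = {poly (map_poly of_int f) (zeta N) | f :: int poly. True}"

definition gen_ideal :: "complex set \<Rightarrow> complex set \<Rightarrow> complex set" where
  "gen_ideal R A = {(\<Sum>i<n. r i * a i) | (n::nat) r a. \<forall>i<n. r i \<in> R \<and> a i \<in> A}"

definition prime_ideal_Zring :: "nat \<Rightarrow> complex set \<Rightarrow> bool" where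
  "prime_ideal_Zring N P \<longleftrightarrow>
     P \<subseteq> Zring N \<and> 0 \<in> P \<and>
     (\<forall>x\<in>P. \<forall>y\<in>P. x + y \<in> P) \<and>
     (\<forall>r\<in>Zring N. \<forall>x\<in>P. r * x \<in> P) \<and>
     1 \<notin> P \<and>
     (\<forall>a\<in>Zring N. \<forall>b\<in>Zring N. a * b \<in> P \<longrightarrow> a \<in> P \<or> b \<in> P)"

definition dlog :: "'a::field \<Rightarrow> 'a \<Rightarrow> nat" where
  "dlog \<alpha> x = (LEAST n. \<alpha> ^ n = x)"

definition eta :: "'a::field \<Rightarrow> nat \<Rightarrow> nat \<Rightarrow> 'a \<Rightarrow> complex" where
  "eta \<alpha> N j x = (if x = 0 then 0 else cis (2 * pi * real j * real (dlog \<alpha> x) / real N))"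

definition rho :: "'a::field \<Rightarrow> 'a \<Rightarrow> complex" where
  "rho \<alpha> = eta \<alpha> 2 1"

definition chi :: "'a::field \<Rightarrow> complex \<Rightarrow> 'a \<Rightarrow> complex" where
  "chi \<alpha> z x = (if x = 0 then 0 else z ^ dlog \<alpha> x)"

definition Ksum :: "'a::{finite,field} \<Rightarrow> ('a \<Rightarrow> complex) \<Rightarrow> complex" where
  "Ksum \<alpha> \<psi> = (\<Sum>x\<in>UNIV. rho \<alpha> x * \<psi> (1 - x))"

definition nonsquare :: "'a::field \<Rightarrow> bool" where
  "nonsquare x \<longleftrightarrow> x \<noteq> 0 \<and> \<not> (\<exists>y. y ^ 2 = x)"

definition slce :: "'a::field \<Rightarrow> nat \<Rightarrow> bool" where
  "slce \<alpha> n \<longleftrightarrow> nonsquare (\<alpha> ^ n + 1)"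

text \<open>The polynomial S(X) = sum_{n<T} s_n X^n, with F_2 coefficients 0/1 read in
  a field 'b of characteristic 2.\<close>
definition Spoly :: "'a::field \<Rightarrow> nat \<Rightarrow> 'b::field poly" where
  "Spoly \<alpha> T = (\<Sum>n<T. if slce \<alpha> n then monom 1 n else 0)"

end

theory Submission imports Defs "Jordan_Normal_Form.Determinant" begin

lemma zeta_pow: "zeta N ^ n = cis (2 * pi * real n / real N)"
proof -
  have "cis (2*pi/real N) ^ n = cis (real n * (2*pi/real N))" by (rule Complex.DeMoivre)
  also have "real n * (2*pi/real N) = 2*pi*real n/real N" by simp
  finally show ?thesis unfolding zeta_def .
qed

lemma zeta_pow_N: "N > 0 \<Longrightarrow> zeta N ^ N = 1"
  by (simp add: zeta_pow)

lemma zeta_pow_mod: "N > 0 \<Longrightarrow> zeta N ^ n = zeta N ^ (n mod N)"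
proof -
  assume N: "N > 0"
  have "zeta N ^ n = zeta N ^ (N * (n div N) + n mod N)" by simp
  also have "\<dots> = (zeta N ^ N) ^ (n div N) * zeta N ^ (n mod N)" by (simp only: power_add power_mult)
  also have "\<dots> = zeta N ^ (n mod N)" by (simp add: zeta_pow_N[OF N])
  finally show ?thesis .
qed

lemma zeta_pow_eq_iff: "N > 0 \<Longrightarrow> zeta N ^ a = zeta N ^ b \<longleftrightarrow> a mod N = b mod N"
proof -
  assume N: "N > 0"
  have inj: "inj_on (\<lambda>k. cis (2 * pi * real k / real N)) {..<N}"
    using Complex.bij_betw_roots_unity[OF N] by (simp add: bij_betw_def)
  show ?thesis
  proof
    assume "zeta N ^ a = zeta N ^ b"
    hence "zeta N ^ (a mod N) = zeta N ^ (b mod N)" using zeta_pow_mod[OF N] by metis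
    hence "cis (2 * pi * real (a mod N) / real N) = cis (2 * pi * real (b mod N) / real N)"
      by (simp add: zeta_pow)
    thus "a mod N = b mod N" using inj_onD[OF inj] N by auto
  qed (metis zeta_pow_mod[OF N])
qed

lemma Zring_char_imp:
  assumes N: "N > 0" and x: "x \<in> Zring N"
  shows "\<exists>c::nat \<Rightarrow> int. x = (\<Sum>m<N. of_int (c m) * zeta N ^ m)"
proof -
  obtain f :: "int poly" where xf: "x = poly (map_poly of_int f) (zeta N)" using x unfolding Zring_def by auto
  have deg: "degree (map_poly (of_int :: int \<Rightarrow> complex) f) = degree f"
    by (rule degree_map_poly) simp
  have "x = (\<Sum>i\<le>degree f. of_int (coeff f i) * zeta N ^ i)"
    unfolding xf poly_altdef deg by (simp add: coeff_map_poly)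
  also have "\<dots> = (\<Sum>i\<le>degree f. of_int (coeff f i) * zeta N ^ (i mod N))"
    using zeta_pow_mod[OF N] by simp
  also have "\<dots> = (\<Sum>m<N. \<Sum>i\<in>{i. i \<in> {..degree f} \<and> i mod N = m}. of_int (coeff f i) * zeta N ^ (i mod N))"
    by (rule sum.group[symmetric]) (use N in auto)
  also have "\<dots> = (\<Sum>m<N. of_int (\<Sum>i\<in>{i. i \<in> {..degree f} \<and> i mod N = m}. coeff f i) * zeta N ^ m)"
    by (auto simp: sum_distrib_right intro!: sum.cong)
  finally show ?thesis by (rule exI[of _ "\<lambda>m. (\<Sum>i | i \<in> {..degree f} \<and> i mod N = m. coeff f i)"])
qed

lemma Zring_char_rev:
  assumes N: "N > 0"
  shows "(\<Sum>m<N. of_int (c m) * zeta N ^ m) \<in> Zring N"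
proof -
  define f :: "int poly" where "f = Poly (map c [0..<N])"
  have cf: "coeff f i = (if i < N then c i else 0)" for i
    unfolding f_def by (simp add: nth_default_def)
  have dg: "degree (map_poly (of_int :: int \<Rightarrow> complex) f) \<le> N"
  proof -
    have "degree (map_poly (of_int :: int \<Rightarrow> complex) f) = degree f"
      by (rule degree_map_poly) simp
    also have "\<dots> \<le> N" unfolding f_def using degree_Poly[of "map c [0..<N]"] by simp
    finally show ?thesis .
  qed
  have "poly (map_poly of_int f) (zeta N) = (\<Sum>i\<le>N. coeff (map_poly (of_int :: int \<Rightarrow> complex) f) i * zeta N ^ i)"
    by (rule poly_as_sum_of_monoms' [OF dg, THEN arg_cong[where f = "\<lambda>p. poly p (zeta N)"], symmetric, THEN trans])
       (simp add: poly_sum poly_monom)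
  also have "\<dots> = (\<Sum>i\<le>N. (if i < N then of_int (c i) else 0) * zeta N ^ i)"
    by (auto simp: coeff_map_poly cf intro!: sum.cong)
  also have "\<dots> = (\<Sum>m<N. of_int (c m) * zeta N ^ m)"
    by (simp add: lessThan_Suc_atMost[symmetric])
  finally have "(\<Sum>m<N. of_int (c m) * zeta N ^ m) = poly (map_poly of_int f) (zeta N)" by simp
  thus ?thesis unfolding Zring_def by (intro CollectI exI[of _ f]) simp
qed

lemma Zring_gen:
  assumes N: "N > 0" and A: "finite A"
  shows "(\<Sum>i\<in>A. of_int (c i) * zeta N ^ (e i)) \<in> Zring N"
proof -
  have "(\<Sum>i\<in>A. of_int (c i) * zeta N ^ (e i)) = (\<Sum>i\<in>A. of_int (c i) * zeta N ^ (e i mod N))"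
    using zeta_pow_mod[OF N] by simp
  also have "\<dots> = (\<Sum>m<N. \<Sum>i\<in>{i. i \<in> A \<and> e i mod N = m}. of_int (c i) * zeta N ^ (e i mod N))"
    by (rule sum.group[symmetric]) (use N A in auto)
  also have "\<dots> = (\<Sum>m<N. of_int (\<Sum>i\<in>{i. i \<in> A \<and> e i mod N = m}. c i) * zeta N ^ m)"
    by (auto simp: sum_distrib_right intro!: sum.cong)
  finally have eq: "(\<Sum>i\<in>A. of_int (c i) * zeta N ^ (e i)) = (\<Sum>m<N. of_int (\<Sum>i\<in>{i. i \<in> A \<and> e i mod N = m}. c i) * zeta N ^ m)" .
  show ?thesis unfolding eq by (rule Zring_char_rev[OF N])
qed

lemma Zring_of_int: "N > 0 \<Longrightarrow> of_int c \<in> Zring N"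
  using Zring_gen[of N "{0::nat}" "\<lambda>_. c" "\<lambda>_. 0"] by simp

lemma Zring_zeta_pow: "N > 0 \<Longrightarrow> zeta N ^ a \<in> Zring N"
  using Zring_gen[of N "{0::nat}" "\<lambda>_. 1" "\<lambda>_. a"] by simp

lemma Zring_add:
  assumes N: "N > 0" and x: "x \<in> Zring N" and y: "y \<in> Zring N"
  shows "x + y \<in> Zring N"
proof -
  obtain c where c: "x = (\<Sum>m<N. of_int (c m) * zeta N ^ m)" using Zring_char_imp[OF N x] by blast
  obtain d where d: "y = (\<Sum>m<N. of_int (d m) * zeta N ^ m)" using Zring_char_imp[OF N y] by blast
  have eq: "x + y = (\<Sum>m<N. of_int (c m + d m) * zeta N ^ m)"
    unfolding c d by (simp add: sum.distrib[symmetric] distrib_right)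
  show ?thesis unfolding eq by (rule Zring_char_rev[OF N])
qed

lemma Zring_mult:
  assumes N: "N > 0" and x: "x \<in> Zring N" and y: "y \<in> Zring N"
  shows "x * y \<in> Zring N"
proof -
  obtain c where c: "x = (\<Sum>m<N. of_int (c m) * zeta N ^ m)" using Zring_char_imp[OF N x] by blast
  obtain d where d: "y = (\<Sum>m<N. of_int (d m) * zeta N ^ m)" using Zring_char_imp[OF N y] by blast
  have eq: "x * y = (\<Sum>p\<in>{..<N} \<times> {..<N}. of_int (c (fst p) * d (snd p)) * zeta N ^ (fst p + snd p))"
    unfolding c d sum_product sum.cartesian_product
    by (auto intro!: sum.cong simp: power_add mult_ac)
  show ?thesis unfolding eq by (rule Zring_gen[OF N]) simp
qed

lemma Zring_uminus: "N > 0 \<Longrightarrow> x \<in> Zring N \<Longrightarrow> - x \<in> Zring N"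
  using Zring_mult[of N "-1" x] Zring_of_int[of N "-1"] by simp

lemma Zring_diff: "N > 0 \<Longrightarrow> x \<in> Zring N \<Longrightarrow> y \<in> Zring N \<Longrightarrow> x - y \<in> Zring N"
  using Zring_add[of N x "-y"] Zring_uminus[of N y] by simp

lemma Zring_sum: "N > 0 \<Longrightarrow> (\<And>i. i \<in> A \<Longrightarrow> f i \<in> Zring N) \<Longrightarrow> sum f A \<in> Zring N"
  by (induction A rule: infinite_finite_induct)
     (auto intro: Zring_add simp: Zring_of_int[of N 0, simplified])

lemma Zring_prod: "N > 0 \<Longrightarrow> (\<And>i. i \<in> A \<Longrightarrow> f i \<in> Zring N) \<Longrightarrow> prod f A \<in> Zring N"
  by (induction A rule: infinite_finite_induct)
     (auto intro: Zring_mult simp: Zring_of_int[of N 1, simplified])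

lemma Zring_pow: "N > 0 \<Longrightarrow> x \<in> Zring N \<Longrightarrow> x ^ n \<in> Zring N"
  using Zring_prod[of N "{..<n}" "\<lambda>_. x"] by simp

context
  fixes k :: nat and P :: "complex set"
  assumes kpos: "k > 0" and PI: "prime_ideal_Zring k P"
begin

lemma P_sub: "x \<in> P \<Longrightarrow> x \<in> Zring k"
  using PI unfolding prime_ideal_Zring_def by auto

lemma P_zero: "0 \<in> P"
  using PI unfolding prime_ideal_Zring_def by auto

lemma P_add: "x \<in> P \<Longrightarrow> y \<in> P \<Longrightarrow> x + y \<in> P"
  using PI unfolding prime_ideal_Zring_def by auto

lemma P_multl: "r \<in> Zring k \<Longrightarrow> x \<in> P \<Longrightarrow> r * x \<in> P"
  using PI unfolding prime_ideal_Zring_def by auto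

lemma P_multr: "r \<in> Zring k \<Longrightarrow> x \<in> P \<Longrightarrow> x * r \<in> P"
  using P_multl[of r x] by (simp add: mult.commute)

lemma P_uminus: "x \<in> P \<Longrightarrow> - x \<in> P"
  using P_multl[of "-1" x] Zring_of_int[OF kpos, of "-1"] by simp

lemma P_sum: "(\<And>i. i \<in> A \<Longrightarrow> f i \<in> P) \<Longrightarrow> sum f A \<in> P"
  by (induction A rule: infinite_finite_induct) (auto intro: P_add simp: P_zero)

lemma P_prime_pow: "x \<in> Zring k \<Longrightarrow> x ^ n \<in> P \<Longrightarrow> x \<in> P"
proof (induction n)
  case 0 thus ?case using PI unfolding prime_ideal_Zring_def by auto
next
  case (Suc n)
  have "x * x ^ n \<in> P" using Suc.prems by simp
  hence "x \<in> P \<or> x ^ n \<in> P"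
    using PI Zring_pow[OF kpos Suc.prems(1)] Suc.prems(1) unfolding prime_ideal_Zring_def by blast
  thus ?case using Suc by blast
qed

lemma prod_minus_mem:
  assumes "finite A" "y \<in> Zring k" "\<And>i. i \<in> A \<Longrightarrow> m i \<in> P"
  shows "(\<Prod>i\<in>A. y - m i) - y ^ card A \<in> P"
  using assms
proof (induction A rule: finite_induct)
  case empty thus ?case by (simp add: P_zero)
next
  case (insert a A)
  have Z: "(\<Prod>i\<in>A. y - m i) \<in> Zring k"
    using insert by (intro Zring_prod[OF kpos] Zring_diff[OF kpos]) (auto intro: P_sub)
  have "(\<Prod>i\<in>insert a A. y - m i) - y ^ card (insert a A)
        = y * ((\<Prod>i\<in>A. y - m i) - y ^ card A) + (- (m a * (\<Prod>i\<in>A. y - m i)))"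
    using insert by (simp add: algebra_simps)
  also have "\<dots> \<in> P"
    using insert Z by (intro P_add P_multl P_uminus P_multr) auto
  finally show ?case .
qed

lemma prod_one_mem:
  assumes "finite A" "a \<in> A" "f a \<in> P" "\<And>i. i \<in> A \<Longrightarrow> f i \<in> Zring k"
  shows "prod f A \<in> P"
proof -
  have "prod f A = f a * prod f (A - {a})" using assms by (simp add: prod.remove)
  also have "\<dots> \<in> P" using assms by (intro P_multr Zring_prod[OF kpos]) auto
  finally show ?thesis .
qed

lemma det_minus_mem:
  fixes M :: "complex mat"
  assumes M: "M \<in> carrier_mat n n" and ME: "\<And>i j. i < n \<Longrightarrow> j < n \<Longrightarrow> M $$ (i,j) \<in> P"
    and y: "y \<in> Zring k"
  shows "det (y \<cdot>\<^sub>m 1\<^sub>m n - M) - y ^ n \<in> P"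
proof -
  define B where "B = y \<cdot>\<^sub>m 1\<^sub>m n - M"
  have Bc: "B \<in> carrier_mat n n" using M unfolding B_def by auto
  have Bi: "B $$ (i,j) = (if i = j then y else 0) - M $$ (i,j)" if "i < n" "j < n" for i j
    using that M unfolding B_def by auto
  have BZ: "B $$ (i,j) \<in> Zring k" if "i < n" "j < n" for i j
    using Bi[OF that] P_sub[OF ME[OF that]] y Zring_diff[OF kpos] Zring_of_int[OF kpos, of 0] by auto
  define Perms where "Perms = {p. p permutes {0..<n}}"
  have fin: "finite Perms" unfolding Perms_def by (simp add: finite_permutations)
  have idP: "id \<in> Perms" unfolding Perms_def by (simp add: permutes_id)
  have "det B = (\<Sum>p\<in>Perms. signof p * (\<Prod>i = 0..<n. B $$ (i, p i)))"
    unfolding Perms_def by (rule det_def'[OF Bc])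
  also have "\<dots> = signof id * (\<Prod>i = 0..<n. B $$ (i, id i)) + (\<Sum>p\<in>Perms - {id}. signof p * (\<Prod>i = 0..<n. B $$ (i, p i)))"
    using fin idP by (simp add: sum.remove)
  finally have detB: "det B = (\<Prod>i = 0..<n. y - M $$ (i,i)) + (\<Sum>p\<in>Perms - {id}. signof p * (\<Prod>i = 0..<n. B $$ (i, p i)))"
    by (simp add: Bi)
  have 1: "(\<Prod>i = 0..<n. y - M $$ (i,i)) - y ^ n \<in> P"
    using prod_minus_mem[of "{0..<n}" y "\<lambda>i. M $$ (i,i)"] y ME by simp
  have 2: "signof p * (\<Prod>i = 0..<n. B $$ (i, p i)) \<in> P" if p: "p \<in> Perms - {id}" for p
  proof -
    have pp: "p permutes {0..<n}" using p unfolding Perms_def by auto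
    have "\<exists>i. i < n \<and> p i \<noteq> i"
    proof (rule ccontr)
      assume "\<not> ?thesis"
      hence "\<forall>i. p i = i" using pp by (metis atLeastLessThan_iff permutes_def zero_le)
      hence "p = id" by auto
      thus False using p by auto
    qed
    then obtain i0 where i0: "i0 < n" "p i0 \<noteq> i0" by blast
    have pin: "p i < n" if "i < n" for i using pp that by (simp add: permutes_in_image)
    have "(\<Prod>i = 0..<n. B $$ (i, p i)) \<in> P"
    proof (rule prod_one_mem[of _ i0])
      show "B $$ (i0, p i0) \<in> P" using Bi[OF i0(1) pin[OF i0(1)]] i0 ME[OF i0(1) pin[OF i0(1)]]
        by (simp add: P_uminus)
    qed (use i0 pin BZ in auto)
    thus ?thesis by (intro P_multl Zring_of_int[OF kpos])
  qed
  have "det B - y ^ n = ((\<Prod>i = 0..<n. y - M $$ (i,i)) - y ^ n) + (\<Sum>p\<in>Perms - {id}. signof p * (\<Prod>i = 0..<n. B $$ (i, p i)))"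
    unfolding detB by simp
  also have "\<dots> \<in> P" using 1 2 by (intro P_add P_sum) auto
  finally show ?thesis unfolding B_def .
qed

lemma contraction:
  assumes L: "L > 0" and y: "y \<in> Zring k" and yI: "y \<in> gen_ideal (Zring L) P"
  shows "y \<in> P"
proof -
  obtain n :: nat and r a :: "nat \<Rightarrow> complex" where ya: "y = (\<Sum>j<n. r j * a j)" and ra: "\<And>j. j < n \<Longrightarrow> r j \<in> Zring L \<and> a j \<in> P"
    using yI unfolding gen_ideal_def by force
  have "\<forall>j l. \<exists>cc. j < n \<longrightarrow> l < L \<longrightarrow> r j * zeta L ^ l = (\<Sum>m<L. of_int (cc m) * zeta L ^ m)"
  proof (intro allI)
    fix j l
    show "\<exists>cc. j < n \<longrightarrow> l < L \<longrightarrow> r j * zeta L ^ l = (\<Sum>m<L. of_int (cc m) * zeta L ^ m)"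
    proof (cases "j < n")
      case True
      hence "r j * zeta L ^ l \<in> Zring L" using ra Zring_mult[OF L] Zring_zeta_pow[OF L] by blast
      thus ?thesis using Zring_char_imp[OF L] by blast
    qed auto
  qed
  then obtain c where c: "\<And>j l. j < n \<Longrightarrow> l < L \<Longrightarrow> r j * zeta L ^ l = (\<Sum>m<L. of_int (c j l m) * zeta L ^ m)"
    by metis
  define M :: "complex mat" where "M = mat L L (\<lambda>(l,m). \<Sum>j<n. of_int (c j l m) * a j)"
  have Mc: "M \<in> carrier_mat L L" unfolding M_def by simp
  have ME: "M $$ (l,m) \<in> P" if "l < L" "m < L" for l m
    using that ra unfolding M_def by (auto intro!: P_sum P_multl Zring_of_int[OF kpos])
  define g :: "complex vec" where "g = vec L (\<lambda>l. zeta L ^ l)"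
  define B where "B = y \<cdot>\<^sub>m 1\<^sub>m L - M"
  have Bc: "B \<in> carrier_mat L L" using Mc unfolding B_def by auto
  have "B *\<^sub>v g = 0\<^sub>v L"
  proof (rule eq_vecI)
    show "dim_vec (B *\<^sub>v g) = dim_vec (0\<^sub>v L)" using Bc by simp
  next
    fix l assume "l < dim_vec (0\<^sub>v L)"
    hence l: "l < L" by simp
    have "(B *\<^sub>v g) $ l = (\<Sum>m<L. B $$ (l,m) * zeta L ^ m)"
      using l Bc unfolding g_def by (simp add: scalar_prod_def row_def lessThan_atLeast0)
    also have "\<dots> = (\<Sum>m<L. (if l = m then y else 0) * zeta L ^ m) - (\<Sum>m<L. M $$ (l,m) * zeta L ^ m)"
      using l Mc unfolding B_def by (simp add: sum_subtractf[symmetric] algebra_simps) (auto intro!: sum.cong)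
    also have "(\<Sum>m<L. (if l = m then y else 0) * zeta L ^ m) = y * zeta L ^ l"
      using l by (simp add: if_distrib[of "\<lambda>x. x * _"] sum.delta cong: if_cong)
    also have "(\<Sum>m<L. M $$ (l,m) * zeta L ^ m) = (\<Sum>m<L. \<Sum>j<n. of_int (c j l m) * a j * zeta L ^ m)"
      using l unfolding M_def by (simp add: sum_distrib_right)
    also have "\<dots> = (\<Sum>j<n. a j * (\<Sum>m<L. of_int (c j l m) * zeta L ^ m))"
      by (subst sum.swap) (simp add: sum_distrib_left mult_ac)
    also have "\<dots> = (\<Sum>j<n. a j * (r j * zeta L ^ l))"
      using c l by simp
    also have "\<dots> = y * zeta L ^ l" unfolding ya by (simp add: sum_distrib_left sum_distrib_right mult_ac)
    finally show "(B *\<^sub>v g) $ l = 0\<^sub>v L $ l" using l by simp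
  qed
  moreover have "g \<in> carrier_vec L" unfolding g_def by simp
  moreover have "g \<noteq> 0\<^sub>v L"
  proof
    assume "g = 0\<^sub>v L"
    hence "g $ 0 = 0\<^sub>v L $ 0" by simp
    thus False using L unfolding g_def by simp
  qed
  ultimately have "det B = 0" using det_0_iff_vec_prod_zero[OF Bc] by blast
  hence "- (y ^ L) \<in> P" using det_minus_mem[OF Mc ME y] unfolding B_def by simp
  hence "y ^ L \<in> P" using P_uminus by fastforce
  thus ?thesis using P_prime_pow y by blast
qed

end


locale ffield =
  fixes \<alpha> :: "'a::{finite,field}" and TT :: nat
  assumes gen: "\<forall>x::'a. x \<noteq> 0 \<longrightarrow> (\<exists>n. \<alpha> ^ n = x)"
    and TTdef: "TT = CARD('a) - 1"
    and Teven: "even TT"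
begin

lemma card_ge2: "CARD('a) \<ge> 2"
proof -
  have "{0::'a, 1} \<subseteq> UNIV" by simp
  hence "card {0::'a, 1} \<le> CARD('a)" by (rule card_mono[rotated]) simp
  thus ?thesis by simp
qed

lemma Tpos: "TT \<ge> 2"
  using card_ge2 Teven TTdef by (cases "CARD('a) = 2") auto

lemma alpha_nz: "\<alpha> \<noteq> 0"
proof
  assume a0: "\<alpha> = 0"
  have "UNIV - {0} \<subseteq> {1::'a}"
  proof
    fix x :: 'a assume "x \<in> UNIV - {0}"
    then obtain n where "\<alpha> ^ n = x" "x \<noteq> 0" using gen by auto
    thus "x \<in> {1}" using a0 by (cases n) auto
  qed
  hence "card (UNIV - {0::'a}) \<le> 1" using card_mono[of "{1::'a}" "UNIV - {0}"] by simp
  hence "TT \<le> 1" by (simp add: card_Diff_subset TTdef)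
  thus False using Tpos by simp
qed

lemma exists_period: "\<exists>d>0. \<alpha> ^ d = 1"
proof -
  have "\<not> inj (\<lambda>n::nat. \<alpha> ^ n)"
  proof
    assume "inj (\<lambda>n::nat. \<alpha> ^ n)"
    moreover have "finite (range (\<lambda>n::nat. \<alpha> ^ n))" by simp
    ultimately have "finite (UNIV :: nat set)" using finite_imageD by blast
    thus False by simp
  qed
  then obtain i j where ij: "i \<noteq> j" "\<alpha> ^ i = \<alpha> ^ j" unfolding inj_def by blast
  show ?thesis
  proof (cases "i < j")
    case True
    have "\<alpha> ^ i * \<alpha> ^ (j - i) = \<alpha> ^ (i + (j - i))" by (simp add: power_add)
    also have "i + (j - i) = j" using True by simp
    finally have "\<alpha> ^ i * \<alpha> ^ (j - i) = \<alpha> ^ i * 1" using ij by simp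
    hence "\<alpha> ^ (j - i) = 1" using alpha_nz by simp
    thus ?thesis using True by (intro exI[of _ "j - i"]) auto
  next
    case False
    hence "j < i" using ij by simp
    have "\<alpha> ^ j * \<alpha> ^ (i - j) = \<alpha> ^ (j + (i - j))" by (simp add: power_add)
    also have "j + (i - j) = i" using \<open>j < i\<close> by simp
    finally have "\<alpha> ^ j * \<alpha> ^ (i - j) = \<alpha> ^ j * 1" using ij by simp
    hence "\<alpha> ^ (i - j) = 1" using alpha_nz by simp
    thus ?thesis using \<open>j < i\<close> by (intro exI[of _ "i - j"]) auto
  qed
qed

definition ordA where "ordA = (LEAST d. 0 < d \<and> \<alpha> ^ d = 1)"

lemma ordA: "0 < ordA" "\<alpha> ^ ordA = 1"
  using LeastI_ex[OF exists_period] unfolding ordA_def by auto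

lemma ordA_min: "0 < d \<Longrightarrow> d < ordA \<Longrightarrow> \<alpha> ^ d \<noteq> 1"
  unfolding ordA_def using not_less_Least by blast

lemma pow_mod_ord: "\<alpha> ^ n = \<alpha> ^ (n mod ordA)"
proof -
  have "\<alpha> ^ n = (\<alpha> ^ ordA) ^ (n div ordA) * \<alpha> ^ (n mod ordA)"
    by (metis div_mult_mod_eq power_add power_mult mult.commute)
  thus ?thesis using ordA by simp
qed

lemma pow_inj_ord: "i < ordA \<Longrightarrow> j < ordA \<Longrightarrow> \<alpha> ^ i = \<alpha> ^ j \<Longrightarrow> i = j"
proof (rule ccontr)
  assume ij: "i < ordA" "j < ordA" "\<alpha> ^ i = \<alpha> ^ j" "i \<noteq> j"
  { fix a b assume ab: "a < b" "b < ordA" "\<alpha> ^ a = \<alpha> ^ b"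
    have "\<alpha> ^ a * \<alpha> ^ (b - a) = \<alpha> ^ (a + (b - a))" by (simp add: power_add)
    also have "a + (b - a) = b" using ab by simp
    finally have "\<alpha> ^ a * \<alpha> ^ (b - a) = \<alpha> ^ a * 1" using ab by simp
    hence "\<alpha> ^ (b - a) = 1" using alpha_nz by simp
    hence False using ordA_min[of "b - a"] ab by auto }
  thus False using ij by (metis linorder_neqE_nat)
qed

lemma ordA_eq: "ordA = TT"
proof -
  have bij: "bij_betw (\<lambda>n. \<alpha> ^ n) {..<ordA} (UNIV - {0})"
    unfolding bij_betw_def
  proof
    show "inj_on (\<lambda>n. \<alpha> ^ n) {..<ordA}" using pow_inj_ord by (auto simp: inj_on_def)
    show "(\<lambda>n. \<alpha> ^ n) ` {..<ordA} = UNIV - {0}"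
    proof
      show "(\<lambda>n. \<alpha> ^ n) ` {..<ordA} \<subseteq> UNIV - {0}" using alpha_nz by auto
      show "UNIV - {0} \<subseteq> (\<lambda>n. \<alpha> ^ n) ` {..<ordA}"
      proof
        fix x :: 'a assume "x \<in> UNIV - {0}"
        then obtain n where "\<alpha> ^ n = x" using gen by auto
        hence "x = \<alpha> ^ (n mod ordA)" using pow_mod_ord by simp
        thus "x \<in> (\<lambda>n. \<alpha> ^ n) ` {..<ordA}" using ordA(1) by auto
      qed
    qed
  qed
  have "ordA = card (UNIV - {0::'a})" using bij_betw_same_card[OF bij] by simp
  thus ?thesis by (simp add: card_Diff_subset TTdef)
qed


lemma pow_T: "\<alpha> ^ TT = 1" using ordA ordA_eq by simp

lemma pow_eq_iff: "\<alpha> ^ a = \<alpha> ^ b \<longleftrightarrow> a mod TT = b mod TT"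
proof
  assume "\<alpha> ^ a = \<alpha> ^ b"
  hence "\<alpha> ^ (a mod ordA) = \<alpha> ^ (b mod ordA)" using pow_mod_ord by metis
  thus "a mod TT = b mod TT" using pow_inj_ord ordA(1) ordA_eq by simp
qed (metis pow_mod_ord ordA_eq)

lemma bij_pow: "bij_betw (\<lambda>n. \<alpha> ^ n) {..<TT} (UNIV - {0})"
  unfolding bij_betw_def
proof
  show "inj_on (\<lambda>n. \<alpha> ^ n) {..<TT}" using pow_eq_iff by (auto simp: inj_on_def)
  show "(\<lambda>n. \<alpha> ^ n) ` {..<TT} = UNIV - {0}"
  proof
    show "(\<lambda>n. \<alpha> ^ n) ` {..<TT} \<subseteq> UNIV - {0}" using alpha_nz by auto
    show "UNIV - {0} \<subseteq> (\<lambda>n. \<alpha> ^ n) ` {..<TT}"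
    proof
      fix x :: 'a assume "x \<in> UNIV - {0}"
      then obtain n where "\<alpha> ^ n = x" using gen by auto
      hence "x = \<alpha> ^ (n mod TT)" using pow_mod_ord ordA_eq by simp
      thus "x \<in> (\<lambda>n. \<alpha> ^ n) ` {..<TT}" using Tpos by auto
    qed
  qed
qed

lemma dlog_pow: "dlog \<alpha> (\<alpha> ^ n) = n mod TT"
  unfolding dlog_def
proof (rule Least_equality)
  show "\<alpha> ^ (n mod TT) = \<alpha> ^ n" using pow_eq_iff by simp
  fix m assume "\<alpha> ^ m = \<alpha> ^ n"
  hence "m mod TT = n mod TT" using pow_eq_iff by simp
  thus "n mod TT \<le> m" using mod_less_eq_dividend[of m TT] by simp
qed

lemma pow_dlog: "x \<noteq> 0 \<Longrightarrow> \<alpha> ^ dlog \<alpha> x = x"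
  unfolding dlog_def using gen by (metis (mono_tags) LeastI)

lemma dlog_lt: "x \<noteq> 0 \<Longrightarrow> dlog \<alpha> x < TT"
proof -
  assume x: "x \<noteq> 0"
  have "dlog \<alpha> x = dlog \<alpha> (\<alpha> ^ dlog \<alpha> x)" using pow_dlog[OF x] by simp
  also have "\<dots> = dlog \<alpha> x mod TT" by (rule dlog_pow)
  also have "\<dots> < TT" using Tpos by simp
  finally show ?thesis .
qed

lemma minus_one_ne_one: "(-1::'a) \<noteq> 1"
proof
  assume m: "(-1::'a) = 1"
  have two: "(2::'a) = 0"
  proof -
    have "(2::'a) = 1 - (-1)" by simp
    thus ?thesis using m by simp
  qed
  have sq_inj: "x = y" if xy: "x ^ 2 = y ^ 2" for x y :: 'a
  proof -
    have "(x - y) ^ 2 = x^2 + y^2 - 2*(x*y)" by (simp add: power2_eq_square algebra_simps)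
    also have "x^2 + y^2 = 2 * y^2" unfolding xy by (rule mult_2[symmetric])
    finally have "(x - y) ^ 2 = 0" using two by simp
    thus ?thesis by simp
  qed
  have "inj (\<lambda>x::'a. x ^ 2)"
  proof (rule injI)
    fix x y :: 'a assume "x ^ 2 = y ^ 2" thus "x = y" by (rule sq_inj)
  qed
  hence "surj (\<lambda>x::'a. x ^ 2)" using finite_UNIV_inj_surj[of "\<lambda>x::'a. x ^ 2"] by simp
  then obtain y where y: "y ^ 2 = \<alpha>" using surjD[of "\<lambda>x::'a. x ^ 2" \<alpha>] by force
  have "y \<noteq> 0" using y alpha_nz by auto
  then obtain m where ym: "\<alpha> ^ m = y" using gen by blast
  have "\<alpha> ^ (m * 2) = (\<alpha> ^ m) ^ 2" by (rule power_mult)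
  hence "\<alpha> ^ (m * 2) = \<alpha> ^ 1" using y ym by simp
  hence "(m * 2) mod TT = 1 mod TT" using pow_eq_iff by blast
  hence "(m * 2) mod TT = 1" using Tpos by simp
  moreover have "even ((m * 2) mod TT)" using Teven dvd_mod[of 2 "m*2" TT] by simp
  ultimately show False by simp
qed

lemma minus_one_pow: "(-1::'a) = \<alpha> ^ (TT div 2)"
proof -
  define x where "x = \<alpha> ^ (TT div 2)"
  have "x ^ 2 = 1" unfolding x_def using pow_T Teven by (simp add: power_mult[symmetric])
  hence "(x - 1) * (x + 1) = 0" by (simp add: algebra_simps power2_eq_square)
  moreover have "x \<noteq> 1"
  proof
    assume "x = 1"
    hence "\<alpha> ^ (TT div 2) = \<alpha> ^ 0" unfolding x_def by simp
    hence "(TT div 2) mod TT = 0 mod TT" using pow_eq_iff[of "TT div 2" 0] by simp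
    moreover have "TT div 2 < TT" "0 < TT div 2" using Tpos by auto
    ultimately show False by simp
  qed
  ultimately have "x = -1" by (simp add: eq_neg_iff_add_eq_0)
  thus ?thesis unfolding x_def by simp
qed

lemma square_iff: "x \<noteq> 0 \<Longrightarrow> (\<exists>y. y ^ 2 = x) \<longleftrightarrow> even (dlog \<alpha> x)"
proof
  assume x: "x \<noteq> 0"
  { assume "\<exists>y. y ^ 2 = x"
    then obtain y where y: "y ^ 2 = x" by blast
    hence "y \<noteq> 0" using x by auto
    then obtain m where "\<alpha> ^ m = y" using gen by blast
    hence "x = (\<alpha> ^ m) ^ 2" using y by simp
    also have "\<dots> = \<alpha> ^ (2 * m)" by (simp add: power_mult[symmetric] mult.commute)
    finally have "x = \<alpha> ^ (2 * m)" .
    hence "dlog \<alpha> x = (2 * m) mod TT" using dlog_pow by simp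
    thus "even (dlog \<alpha> x)" using Teven dvd_mod[of 2 "2*m" TT] by simp }
  { assume e: "even (dlog \<alpha> x)"
    then obtain d where "dlog \<alpha> x = 2 * d" by blast
    hence "(\<alpha> ^ d) ^ 2 = x" using pow_dlog[OF x] by (simp add: power_mult[symmetric] mult.commute)
    thus "\<exists>y. y ^ 2 = x" by blast }
qed

end


lemma pow_mod_period: "(w::complex) ^ T = 1 \<Longrightarrow> w ^ (a mod T) = w ^ a"
proof -
  assume w: "w ^ T = 1"
  have "w ^ a = (w ^ T) ^ (a div T) * w ^ (a mod T)"
    by (metis div_mult_mod_eq power_add power_mult mult.commute)
  thus ?thesis using w by simp
qed

lemma geo_sum_root: "(w::complex) ^ T = 1 \<Longrightarrow> (\<Sum>j<T. w ^ j) = (if w = 1 then of_nat T else 0)"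
  by (auto simp: geometric_sum)

lemma zeta2: "zeta 2 = -1"
  unfolding zeta_def by (simp add: complex_eq_iff)

context ffield
begin

lemma eta_nz: "x \<noteq> 0 \<Longrightarrow> eta \<alpha> N j x = zeta N ^ (j * dlog \<alpha> x)"
  unfolding eta_def zeta_pow by (simp add: mult_ac)

lemma rho_nz: "x \<noteq> 0 \<Longrightarrow> rho \<alpha> x = (-1) ^ dlog \<alpha> x"
  unfolding rho_def using eta_nz[of x 2 1] zeta2 by simp

lemma chi_nz: "x \<noteq> 0 \<Longrightarrow> chi \<alpha> w x = w ^ dlog \<alpha> x"
  unfolding chi_def by simp

lemma bij_shift: "bij_betw (\<lambda>n. 1 + \<alpha> ^ n) {..<TT} (UNIV - {1})"
proof -
  have b1: "bij_betw (\<lambda>x. 1 + x) (UNIV - {0::'a}) (UNIV - {1})"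
    unfolding bij_betw_def inj_on_def
  proof (intro conjI ballI impI)
    show "(+) 1 ` (UNIV - {0::'a}) = UNIV - {1}"
    proof
      show "(+) 1 ` (UNIV - {0::'a}) \<subseteq> UNIV - {1}" by auto
      show "UNIV - {1} \<subseteq> (+) 1 ` (UNIV - {0::'a})"
      proof
        fix x :: 'a assume "x \<in> UNIV - {1}"
        hence "x - 1 \<in> UNIV - {0}" "x = 1 + (x - 1)" by auto
        thus "x \<in> (+) 1 ` (UNIV - {0})" by blast
      qed
    qed
  qed auto
  show ?thesis using bij_betw_trans[OF bij_pow b1] by (simp add: o_def)
qed

lemma Ksum_expand:
  assumes "\<psi> 0 = 0"
  shows "Ksum \<alpha> \<psi> = (\<Sum>n<TT. rho \<alpha> (1 + \<alpha> ^ n) * \<psi> (- (\<alpha> ^ n)))"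
proof -
  have "Ksum \<alpha> \<psi> = (\<Sum>x\<in>insert 1 (UNIV - {1}). rho \<alpha> x * \<psi> (1 - x))"
    unfolding Ksum_def by (simp add: insert_Diff)
  also have "\<dots> = (\<Sum>x\<in>UNIV - {1}. rho \<alpha> x * \<psi> (1 - x))"
    using assms by (subst sum.insert) auto
  also have "\<dots> = (\<Sum>n<TT. rho \<alpha> (1 + \<alpha> ^ n) * \<psi> (1 - (1 + \<alpha> ^ n)))"
    by (rule sum.reindex_bij_betw[OF bij_shift, symmetric])
  finally show ?thesis by simp
qed

lemma dlog_minus_one: "dlog \<alpha> (-1) = TT div 2"
  using dlog_pow[of "TT div 2"] minus_one_pow Tpos by simp

lemma minus_pow: "- (\<alpha> ^ n) = \<alpha> ^ (n + TT div 2)"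
proof -
  have "- (\<alpha> ^ n) = \<alpha> ^ n * (-1)" by simp
  also have "\<dots> = \<alpha> ^ n * \<alpha> ^ (TT div 2)" using minus_one_pow by simp
  finally show ?thesis by (simp add: power_add)
qed

end

locale chsum = ffield +
  fixes N :: nat and z :: complex
  assumes Npos: "N > 0" and NdvdT: "N dvd TT"
    and zT: "z ^ TT = 1" and zhalf: "z ^ (TT div 2) = 1"
    and znot: "\<And>j. zeta N ^ j * z \<noteq> 1"
begin

lemma omegaT: "(zeta N ^ j) ^ TT = 1"
proof -
  obtain c where "TT = N * c" using NdvdT by blast
  hence "(zeta N ^ j) ^ TT = ((zeta N ^ N) ^ c) ^ j" by (simp add: power_mult[symmetric] mult_ac)
  thus ?thesis using zeta_pow_N[OF Npos] by simp
qed

lemma term_v: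
  "eta \<alpha> N j (-1) * Ksum \<alpha> (\<lambda>x. eta \<alpha> N j x * chi \<alpha> z x)
     = (\<Sum>n<TT. rho \<alpha> (1 + \<alpha> ^ n) * (zeta N ^ j) ^ n * z ^ n)"
proof -
  have e1: "eta \<alpha> N j (-1) = (zeta N ^ j) ^ (TT div 2)"
    using eta_nz[of "-1" N j] dlog_minus_one by (simp add: power_mult)
  have e2: "eta \<alpha> N j (- (\<alpha> ^ n)) * chi \<alpha> z (- (\<alpha> ^ n)) = (zeta N ^ j) ^ (n + TT div 2) * z ^ n" for n
  proof -
    have nz: "- (\<alpha> ^ n) \<noteq> 0" using alpha_nz by simp
    have d: "dlog \<alpha> (- (\<alpha> ^ n)) = (n + TT div 2) mod TT" using minus_pow dlog_pow by simp
    have "eta \<alpha> N j (- (\<alpha> ^ n)) = (zeta N ^ j) ^ ((n + TT div 2) mod TT)"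
      using eta_nz[OF nz, of N j] d by (simp add: power_mult)
    also have "\<dots> = (zeta N ^ j) ^ (n + TT div 2)" by (rule pow_mod_period[OF omegaT])
    finally have 1: "eta \<alpha> N j (- (\<alpha> ^ n)) = (zeta N ^ j) ^ (n + TT div 2)" .
    have "chi \<alpha> z (- (\<alpha> ^ n)) = z ^ ((n + TT div 2) mod TT)" using chi_nz[OF nz] d by simp
    also have "\<dots> = z ^ (n + TT div 2)" by (rule pow_mod_period[OF zT])
    also have "\<dots> = z ^ n" using zhalf by (simp add: power_add)
    finally show ?thesis using 1 by simp
  qed
  have half: "(zeta N ^ j) ^ (TT div 2) * (zeta N ^ j) ^ (TT div 2) = 1"
  proof -
    have "(zeta N ^ j) ^ (TT div 2) * (zeta N ^ j) ^ (TT div 2) = (zeta N ^ j) ^ TT"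
    proof -
      have "TT div 2 + TT div 2 = TT" using Teven by auto
      thus ?thesis by (simp add: power_add[symmetric])
    qed
    thus ?thesis using omegaT by simp
  qed
  have "eta \<alpha> N j (-1) * Ksum \<alpha> (\<lambda>x. eta \<alpha> N j x * chi \<alpha> z x)
     = (zeta N ^ j) ^ (TT div 2) * (\<Sum>n<TT. rho \<alpha> (1 + \<alpha> ^ n) * ((zeta N ^ j) ^ (n + TT div 2) * z ^ n))"
  proof -
    have "Ksum \<alpha> (\<lambda>x. eta \<alpha> N j x * chi \<alpha> z x) = (\<Sum>n<TT. rho \<alpha> (1 + \<alpha> ^ n) * (eta \<alpha> N j (- (\<alpha> ^ n)) * chi \<alpha> z (- (\<alpha> ^ n))))"
      by (rule Ksum_expand) (simp add: eta_def)
    also have "\<dots> = (\<Sum>n<TT. rho \<alpha> (1 + \<alpha> ^ n) * ((zeta N ^ j) ^ (n + TT div 2) * z ^ n))"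
      using e2 by simp
    finally show ?thesis unfolding e1 by simp
  qed
  also have "\<dots> = (\<Sum>n<TT. rho \<alpha> (1 + \<alpha> ^ n) * (zeta N ^ j) ^ n * z ^ n * ((zeta N ^ j) ^ (TT div 2) * (zeta N ^ j) ^ (TT div 2)))"
    by (simp add: sum_distrib_left power_add mult_ac)
  also have "\<dots> = (\<Sum>n<TT. rho \<alpha> (1 + \<alpha> ^ n) * (zeta N ^ j) ^ n * z ^ n)"
    unfolding half by simp
  finally show ?thesis .
qed


lemma orth: "i < N \<Longrightarrow> (\<Sum>j<N. (inverse (zeta N) ^ i * zeta N ^ n) ^ j) = (if n mod N = i then of_nat N else 0)"
proof -
  assume i: "i < N"
  have zn: "zeta N \<noteq> 0" using zeta_pow_N[OF Npos] by (metis Npos power_0_left zero_neq_one gr_implies_not0)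
  have w: "(inverse (zeta N) ^ i * zeta N ^ n) ^ N = 1"
    by (simp add: power_mult_distrib power_mult[symmetric] mult.commute[of _ N] power_inverse zeta_pow_N[OF Npos])
      (simp add: power_mult zeta_pow_N[OF Npos])
  have "inverse (zeta N) ^ i * zeta N ^ n = 1 \<longleftrightarrow> zeta N ^ n = zeta N ^ i"
    using zn by (auto simp: power_inverse field_simps)
  also have "\<dots> \<longleftrightarrow> n mod N = i" using zeta_pow_eq_iff[OF Npos] i by simp
  finally show ?thesis using geo_sum_root[OF w] by simp
qed

lemma E_formula:
  assumes i: "i < N"
  shows "(\<Sum>j<N. inverse (zeta N) ^ (i * j) * eta \<alpha> N j (-1) * Ksum \<alpha> (\<lambda>x. eta \<alpha> N j x * chi \<alpha> z x))
    = of_nat N * (\<Sum>n<TT. if n mod N = i then rho \<alpha> (1 + \<alpha> ^ n) * z ^ n else 0)"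
proof -
  have alg: "inverse (zeta N) ^ (i * j) * ((zeta N ^ j) ^ n) = (inverse (zeta N) ^ i * zeta N ^ n) ^ j" for j n
    by (simp add: power_mult_distrib power_mult[symmetric] mult.commute)
  have "(\<Sum>j<N. inverse (zeta N) ^ (i * j) * eta \<alpha> N j (-1) * Ksum \<alpha> (\<lambda>x. eta \<alpha> N j x * chi \<alpha> z x))
      = (\<Sum>j<N. inverse (zeta N) ^ (i * j) * (\<Sum>n<TT. rho \<alpha> (1 + \<alpha> ^ n) * (zeta N ^ j) ^ n * z ^ n))"
    by (simp add: mult.assoc term_v)
  also have "\<dots> = (\<Sum>j<N. \<Sum>n<TT. rho \<alpha> (1 + \<alpha> ^ n) * z ^ n * (inverse (zeta N) ^ (i * j) * (zeta N ^ j) ^ n))"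
    by (simp add: sum_distrib_left mult_ac)
  also have "\<dots> = (\<Sum>n<TT. rho \<alpha> (1 + \<alpha> ^ n) * z ^ n * (\<Sum>j<N. (inverse (zeta N) ^ i * zeta N ^ n) ^ j))"
    by (subst sum.swap) (simp add: sum_distrib_left alg)
  also have "\<dots> = (\<Sum>n<TT. rho \<alpha> (1 + \<alpha> ^ n) * z ^ n * (if n mod N = i then of_nat N else 0))"
    using orth[OF i] by simp
  also have "\<dots> = of_nat N * (\<Sum>n<TT. if n mod N = i then rho \<alpha> (1 + \<alpha> ^ n) * z ^ n else 0)"
    by (simp add: sum_distrib_left if_distrib mult_ac cong: if_cong)
  finally show ?thesis .
qed

lemma Z0:
  assumes i: "i < N"
  shows "(\<Sum>n<TT. if n mod N = i then z ^ n else 0) = 0"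
proof -
  have alg: "z ^ n * (inverse (zeta N) ^ i * zeta N ^ n) ^ j = inverse (zeta N) ^ (i * j) * (zeta N ^ j * z) ^ n" for j n
    by (simp add: power_mult_distrib power_mult[symmetric] mult.commute)
  have "of_nat N * (\<Sum>n<TT. if n mod N = i then z ^ n else 0) = (\<Sum>n<TT. z ^ n * (\<Sum>j<N. (inverse (zeta N) ^ i * zeta N ^ n) ^ j))"
  proof -
    have "(\<Sum>n<TT. z ^ n * (\<Sum>j<N. (inverse (zeta N) ^ i * zeta N ^ n) ^ j)) = (\<Sum>n<TT. z ^ n * (if n mod N = i then of_nat N else 0))"
      by (simp only: orth[OF i])
    also have "\<dots> = of_nat N * (\<Sum>n<TT. if n mod N = i then z ^ n else 0)"
      by (auto simp: sum_distrib_left intro!: sum.cong)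
    finally show ?thesis by simp
  qed
  also have "\<dots> = (\<Sum>j<N. inverse (zeta N) ^ (i * j) * (\<Sum>n<TT. (zeta N ^ j * z) ^ n))"
    by (simp add: sum_distrib_left alg) (rule sum.swap)
  also have "\<dots> = 0"
  proof -
    have "(\<Sum>n<TT. (zeta N ^ j * z) ^ n) = 0" for j
    proof -
      have "(zeta N ^ j * z) ^ TT = 1" using omegaT zT by (simp add: power_mult_distrib)
      thus ?thesis using geo_sum_root znot by simp
    qed
    thus ?thesis by simp
  qed
  finally show ?thesis using Npos by simp
qed


lemma sum_split_rho:
  assumes i: "i < N"
  shows "(\<Sum>n<TT. if n mod N = i then rho \<alpha> (1 + \<alpha> ^ n) * z ^ n else 0)
    = - 2 * (\<Sum>n<TT. if n mod N = i \<and> slce \<alpha> n then z ^ n else 0) - (if (TT div 2) mod N = i then 1 else 0)"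
proof -
  have r: "(if n mod N = i then rho \<alpha> (1 + \<alpha> ^ n) * z ^ n else 0)
     = (if n mod N = i then z ^ n else 0) - 2 * (if n mod N = i \<and> slce \<alpha> n then z ^ n else 0)
       - (if n = TT div 2 \<and> (TT div 2) mod N = i then 1 else 0)" if n: "n < TT" for n
  proof (cases "1 + \<alpha> ^ n = 0")
    case True
    hence "\<alpha> ^ n = \<alpha> ^ (TT div 2)" using minus_one_pow by (simp add: add_eq_0_iff)
    hence "n mod TT = (TT div 2) mod TT" using pow_eq_iff by blast
    hence nh: "n = TT div 2" using n Tpos by simp
    have "\<not> slce \<alpha> n" using True unfolding slce_def nonsquare_def by (simp add: add.commute)
    moreover have "rho \<alpha> (1 + \<alpha> ^ n) = 0" using True unfolding rho_def eta_def by simp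
    ultimately show ?thesis using nh zhalf by auto
  next
    case False
    have nh: "n \<noteq> TT div 2"
    proof
      assume "n = TT div 2"
      hence "1 + \<alpha> ^ n = 1 + (-1)" using minus_one_pow by simp
      hence "1 + \<alpha> ^ n = 0" by simp
      thus False using False by simp
    qed
    have sl: "slce \<alpha> n \<longleftrightarrow> odd (dlog \<alpha> (1 + \<alpha> ^ n))"
      using square_iff[OF False] False unfolding slce_def nonsquare_def by (simp add: add.commute)
    have "rho \<alpha> (1 + \<alpha> ^ n) = (-1) ^ dlog \<alpha> (1 + \<alpha> ^ n)" by (rule rho_nz[OF False])
    thus ?thesis using sl nh by (auto simp: minus_one_power_iff)
  qed
  have "(\<Sum>n<TT. if n mod N = i then rho \<alpha> (1 + \<alpha> ^ n) * z ^ n else 0)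
     = (\<Sum>n<TT. if n mod N = i then z ^ n else 0) - 2 * (\<Sum>n<TT. if n mod N = i \<and> slce \<alpha> n then z ^ n else 0)
       - (\<Sum>n<TT. if n = TT div 2 \<and> (TT div 2) mod N = i then 1 else 0)"
    by (simp add: r sum_subtractf sum_distrib_left)
  also have "(\<Sum>n<TT. if n = TT div 2 \<and> (TT div 2) mod N = i then (1::complex) else 0) = (if (TT div 2) mod N = i then 1 else 0)"
  proof -
    have "TT div 2 < TT" using Tpos by simp
    thus ?thesis by (simp add: sum.delta' if_distrib cong: if_cong)
  qed
  finally show ?thesis using Z0[OF i] by simp
qed

end


lemma two_poly_zero:
  assumes "CHAR('b::field) = 2"
  shows "(2::'b poly) = 0"
proof -
  have "(of_nat 2 :: 'b) = 0" using of_nat_eq_0_iff_char_dvd[of 2, where 'a='b] assms by simp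
  hence "(of_nat 2 :: 'b poly) = 0" by (simp add: of_nat_poly)
  thus ?thesis by simp
qed

lemma frob_lin:
  assumes "CHAR('b::field) = 2"
  shows "[:-\<beta>, 1:] ^ (2 ^ h) = monom (1::'b) (2 ^ h) - [:\<beta> ^ (2 ^ h):]"
proof (induction h)
  case 0
  show ?case by (auto simp: poly_eq_iff coeff_monom coeff_pCons' )
next
  case (Suc h)
  have two: "(2::'b poly) = 0" by (rule two_poly_zero[OF assms])
  have sq: "(a - b) ^ 2 = a ^ 2 - b ^ 2" for a b :: "'b poly"
  proof -
    have "(a - b) ^ 2 - (a ^ 2 - b ^ 2) = 2 * (b ^ 2 - a * b)"
      by (simp add: power2_eq_square algebra_simps)
    thus ?thesis using two by simp
  qed
  have "[:-\<beta>, 1:] ^ (2 ^ Suc h) = ([:-\<beta>, 1:] ^ (2 ^ h)) ^ 2" by (simp add: power_mult[symmetric] mult.commute)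
  also have "\<dots> = (monom 1 (2 ^ h)) ^ 2 - [:\<beta> ^ (2 ^ h):] ^ 2" unfolding Suc sq ..
  also have "\<dots> = monom 1 (2 ^ Suc h) - [:\<beta> ^ (2 ^ Suc h):]"
    by (simp add: monom_power poly_const_pow power_mult[symmetric] mult.commute)
  finally show ?case .
qed

lemma monom_diff_dvd:
  fixes c :: "'b::field"
  assumes N: "N > 0"
  shows "(monom 1 N - [:c:]) dvd (monom 1 n - monom (c ^ (n div N)) (n mod N))"
proof -
  have "monom (1::'b) n = monom 1 (n mod N) * (monom 1 N) ^ (n div N)"
    by (simp add: monom_power mult_monom)
  moreover have "monom (c ^ (n div N)) (n mod N) = monom 1 (n mod N) * [:c:] ^ (n div N)"
    by (simp add: monom_altdef poly_const_pow)
  ultimately have "monom 1 n - monom (c ^ (n div N)) (n mod N) = monom 1 (n mod N) * ((monom 1 N) ^ (n div N) - [:c:] ^ (n div N))"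
    by (simp add: algebra_simps)
  also have "(monom 1 N) ^ (n div N) - [:c:] ^ (n div N) = (monom 1 N - [:c:]) * (\<Sum>i<n div N. [:c:] ^ (n div N - Suc i) * (monom 1 N) ^ i)"
    by (rule power_diff_sumr2)
  finally show ?thesis by (simp add: dvd_def)
qed


lemma dvd_criterion:
  fixes \<beta> :: "'b::field" and s :: "nat \<Rightarrow> bool"
  assumes N: "N > 0" and b0: "\<beta> \<noteq> 0"
  shows "(monom 1 N - [:\<beta> ^ N:]) dvd (\<Sum>n<T. if s n then monom 1 n else 0)
     \<longleftrightarrow> (\<forall>i<N. (\<Sum>n<T. if n mod N = i \<and> s n then \<beta> ^ n else 0) = 0)"
proof -
  define c where "c = \<beta> ^ N"
  define D :: "'b poly" where "D = monom 1 N - [:c:]"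
  define S :: "'b poly" where "S = (\<Sum>n<T. if s n then monom 1 n else 0)"
  define R :: "'b poly" where "R = (\<Sum>n<T. if s n then monom (c ^ (n div N)) (n mod N) else 0)"
  have "D dvd S - R"
    unfolding S_def R_def D_def sum_subtractf[symmetric]
    by (rule dvd_sum) (auto intro: monom_diff_dvd[OF N])
  hence iff1: "D dvd S \<longleftrightarrow> D dvd R"
    by (metis diff_add_cancel dvd_add_left_iff dvd_add_right_iff add.commute)
  have cD: "coeff D N = 1" unfolding D_def using N by (cases N) auto
  hence D0: "D \<noteq> 0" by auto
  have dD: "N \<le> degree D" using cD by (intro le_degree) simp
  have dR: "degree R < N \<or> R = 0"
  proof (cases "R = 0")
    case False
    have hm: "degree (monom a (p mod N)) \<le> N - 1" for a :: 'b and p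
      using degree_monom_le[of a "p mod N"] mod_less_divisor[OF N, of p] by linarith
    have "degree R \<le> N - 1" unfolding R_def
      by (rule degree_sum_le) (use hm in auto)
    thus ?thesis using N by linarith
  qed simp
  have iff2: "D dvd R \<longleftrightarrow> R = 0"
  proof
    assume "D dvd R"
    show "R = 0"
    proof (rule ccontr)
      assume "R \<noteq> 0"
      hence "degree D \<le> degree R" using \<open>D dvd R\<close> by (rule dvd_imp_degree_le[rotated])
      thus False using dD dR \<open>R \<noteq> 0\<close> by simp
    qed
  qed simp
  have cR: "coeff R i = (\<Sum>n<T. if n mod N = i \<and> s n then c ^ (n div N) else 0)" for i
    unfolding R_def coeff_sum by (auto intro!: sum.cong simp: coeff_monom)
  have iff3: "R = 0 \<longleftrightarrow> (\<forall>i<N. coeff R i = 0)"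
  proof
    assume A: "\<forall>i<N. coeff R i = 0"
    have B: "coeff R i = 0" if "i \<ge> N" for i
    proof -
      have "(if n mod N = i \<and> s n then c ^ (n div N) else 0) = 0" for n
        using mod_less_divisor[OF N, of n] that by auto
      thus ?thesis unfolding cR by simp
    qed
    show "R = 0"
    proof (intro poly_eqI)
      fix i show "coeff R i = coeff 0 i" using A B by (cases "i < N") auto
    qed
  qed simp
  have iff4: "coeff R i = 0 \<longleftrightarrow> (\<Sum>n<T. if n mod N = i \<and> s n then \<beta> ^ n else 0) = 0" for i
  proof -
    have "\<beta> ^ i * coeff R i = (\<Sum>n<T. if n mod N = i \<and> s n then \<beta> ^ n else 0)"
    proof -
      have "\<beta> ^ i * (if n mod N = i \<and> s n then c ^ (n div N) else 0) = (if n mod N = i \<and> s n then \<beta> ^ n else 0)" for n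
      proof (cases "n mod N = i \<and> s n")
        case True
        have "\<beta> ^ n = \<beta> ^ (n mod N + N * (n div N))" by simp
        also have "\<dots> = \<beta> ^ i * c ^ (n div N)" using True unfolding c_def by (simp add: power_add power_mult)
        finally show ?thesis using True by simp
      next
        case False
        show ?thesis unfolding if_not_P[OF False] by simp
      qed
      thus ?thesis unfolding cR by (simp add: sum_distrib_left)
    qed
    thus ?thesis using b0 by (metis mult_eq_0_iff power_not_zero)
  qed
  show ?thesis unfolding D_def[symmetric] c_def[symmetric] S_def[symmetric]
    using iff1 iff2 iff3 iff4 by simp
qed


lemma hom_sum:
  fixes \<theta> :: "complex \<Rightarrow> 'b::field"
  assumes k: "k > 0" and add: "\<forall>x\<in>Zring k. \<forall>y\<in>Zring k. \<theta> (x + y) = \<theta> x + \<theta> y"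
    and t0: "\<theta> 0 = 0" and f: "\<And>i. i \<in> A \<Longrightarrow> f i \<in> Zring k"
  shows "\<theta> (sum f A) = (\<Sum>i\<in>A. \<theta> (f i))"
  using f
proof (induction A rule: infinite_finite_induct)
  case (insert a A)
  have "\<theta> (sum f (insert a A)) = \<theta> (f a + sum f A)" using insert by simp
  also have "\<dots> = \<theta> (f a) + \<theta> (sum f A)"
    using add insert Zring_sum[OF k, of A f] by auto
  finally show ?case using insert by simp
qed (simp_all add: t0)

lemma char2_order_odd:
  fixes \<beta> :: "'b::field"
  assumes ch: "CHAR('b) = 2" and bk: "\<beta> ^ k = 1" and mn: "\<forall>j. 0 < j \<and> j < k \<longrightarrow> \<beta> ^ j \<noteq> 1"
    and k: "k > 1"
  shows "odd k"
proof
  assume "even k"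
  then obtain l where l: "k = 2 * l" by blast
  have two: "(2::'b) = 0" using of_nat_eq_0_iff_char_dvd[of 2, where 'a='b] ch by simp
  define x where "x = \<beta> ^ l"
  have "x ^ 2 = 1" unfolding x_def using bk l by (simp add: power_mult[symmetric] mult.commute)
  hence "(x - 1) ^ 2 = 0"
  proof -
    assume x2: "x ^ 2 = 1"
    have "(x - 1) ^ 2 = x ^ 2 + 1 - 2 * x" by (simp add: power2_eq_square algebra_simps)
    also have "\<dots> = 0" using x2 two by simp
    finally show ?thesis .
  qed
  hence "\<beta> ^ l = 1" unfolding x_def by simp
  moreover have "0 < l" "l < k" using l k by auto
  ultimately show False using mn by blast
qed

theorem mainTheorem6:
  fixes p m u T' h k :: nat
    and \<alpha> :: "'a::{finite,field}"
    and \<beta> :: "'b::field"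
    and P :: "complex set"
    and \<theta> :: "complex \<Rightarrow> 'b"
    and z :: complex
  assumes "prime p" and "odd p" and "m \<ge> 1" and "CARD('a) = p ^ m"
    and "\<forall>x::'a. x \<noteq> 0 \<longrightarrow> (\<exists>n. \<alpha> ^ n = x)"
    and "CARD('a) - 1 = 2 ^ u * T'" and "u \<ge> 1" and "odd T'"
    and "CHAR('b) = 2"
    and "\<beta> ^ (CARD('a) - 1) = 1"
    and "k > 1" and "\<beta> ^ k = 1" and "\<forall>j. 0 < j \<and> j < k \<longrightarrow> \<beta> ^ j \<noteq> 1"
    and "prime_ideal_Zring k P" and "2 \<in> P"
    and "\<forall>x\<in>Zring k. \<forall>y\<in>Zring k. \<theta> (x + y) = \<theta> x + \<theta> y"
    and "\<forall>x\<in>Zring k. \<forall>y\<in>Zring k. \<theta> (x * y) = \<theta> x * \<theta> y"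
    and "\<theta> 1 = 1"
    and "\<forall>x\<in>Zring k. \<theta> x = 0 \<longleftrightarrow> x \<in> P"
    and "z ^ k = 1" and "\<theta> z = \<beta>"
    and "1 \<le> h" and "h \<le> u"
  shows "([:-\<beta>, 1:] ^ (2 ^ h) dvd (Spoly \<alpha> (CARD('a) - 1) :: 'b poly)) \<longleftrightarrow>
    (\<forall>i < 2 ^ h.
       (\<Sum>j < 2 ^ h. inverse (zeta (2 ^ h)) ^ (i * j) * eta \<alpha> (2 ^ h) j (-1)
            * Ksum \<alpha> (\<lambda>x. eta \<alpha> (2 ^ h) j x * chi \<alpha> z x))
       - (- (2 ^ h * (if ((CARD('a) - 1) div 2) mod 2 ^ h = i then 1 else 0)))
       \<in> gen_ideal (Zring (2 ^ h * k)) ((\<lambda>x. 2 ^ (h + 1) * x) ` P))"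
proof -
  note A = assms
  define T where "T = CARD('a) - 1"
  define N :: nat where "N = 2 ^ h"
  define L :: nat where "L = 2 ^ h * k"
  have Npos: "N > 0" and Lpos: "L > 0" and kpos: "k > 0" using A(11) unfolding N_def L_def by auto
  have Teven: "even T" unfolding T_def using A(6) A(7) by (cases u) auto
  have NdvdT: "N dvd T" unfolding T_def N_def A(6) using A(23) by (simp add: le_imp_power_dvd)
  interpret ff: ffield \<alpha> T
    by unfold_locales (use A(5) T_def Teven in auto)
  have kodd: "odd k" using char2_order_odd[OF A(9) A(12) A(13) A(11)] .
  have b0: "\<beta> \<noteq> 0"
  proof
    assume "\<beta> = 0"
    hence "\<beta> ^ k = 0" using kpos by simp
    thus False using A(12) by simp
  qed
  have kdvdT: "k dvd T"
  proof -
    have "\<beta> ^ T = \<beta> ^ (k * (T div k) + T mod k)" by simp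
    also have "\<dots> = (\<beta> ^ k) ^ (T div k) * \<beta> ^ (T mod k)" by (simp only: power_add power_mult)
    finally have "\<beta> ^ T = (\<beta> ^ k) ^ (T div k) * \<beta> ^ (T mod k)" .
    hence "\<beta> ^ (T mod k) = 1" using A(10) A(12) unfolding T_def by simp
    hence "T mod k = 0" by (cases "T mod k = 0") (use A(13) mod_less_divisor[OF kpos, of T] in auto)
    thus ?thesis by auto
  qed
  have kdvdT2: "k dvd T div 2"
  proof -
    have Th: "T = (T div 2) * 2" using Teven by simp
    from kdvdT have "k dvd (T div 2) * 2" by (subst (asm) Th)
    thus ?thesis using kodd coprime_dvd_mult_left_iff[of k 2 "T div 2"] by simp
  qed
  have zZ: "z \<in> Zring k"
  proof -
    have "z \<in> {z. z ^ k = 1}" using A(20) by simp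
    then obtain a where "z = cis (2 * pi * real a / real k)"
      using Complex.bij_betw_roots_unity[OF kpos] unfolding bij_betw_def by auto
    hence "z = zeta k ^ a" by (simp add: zeta_pow)
    thus ?thesis using Zring_zeta_pow[OF kpos] by simp
  qed
  have t0: "\<theta> 0 = 0"
  proof -
    have "\<theta> (0 + 0) = \<theta> 0 + \<theta> 0" using A(16) Zring_of_int[OF kpos, of 0, simplified] by blast
    hence "\<theta> 0 + \<theta> 0 = \<theta> 0 + 0" by (simp only: add_0_right add_0_left)
    thus ?thesis by (rule add_left_imp_eq)
  qed
  have tz: "\<theta> (z ^ n) = \<beta> ^ n" for n
  proof (induction n)
    case 0 thus ?case using A(18) by simp
  next
    case (Suc n)
    have "\<theta> (z * z ^ n) = \<theta> z * \<theta> (z ^ n)" using A(17) zZ Zring_pow[OF kpos zZ] by blast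
    thus ?case using Suc A(21) by simp
  qed
  have zT: "z ^ T = 1"
  proof -
    obtain c where "T = k * c" using kdvdT by blast
    thus ?thesis using A(20) by (simp add: power_mult)
  qed
  have zhalf: "z ^ (T div 2) = 1"
  proof -
    obtain c where "T div 2 = k * c" using kdvdT2 by blast
    thus ?thesis using A(20) by (simp add: power_mult)
  qed
  have znot: "zeta N ^ j * z \<noteq> 1" for j
  proof
    assume e: "zeta N ^ j * z = 1"
    have "(zeta N ^ j) ^ N = (zeta N ^ N) ^ j" by (simp only: power_mult[symmetric] mult.commute)
    hence "(zeta N ^ j * z) ^ N = (zeta N ^ N) ^ j * z ^ N" by (simp only: power_mult_distrib)
    hence zN: "z ^ N = 1" using e zeta_pow_N[OF Npos] by simp
    have "coprime N k" unfolding N_def using kodd A(22) by simp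
    hence "gcd N k = 1" by simp
    then obtain x y where xy: "N * x = k * y + 1" using bezout_nat[of N k] Npos by auto
    have "z ^ (N * x) = z ^ (k * y) * z" by (simp add: xy power_add)
    hence "z = 1" using zN A(20) by (simp add: power_mult)
    hence "\<beta> = 1" using A(21) A(18) by simp
    thus False using A(13)[rule_format, of 1] A(11) by simp
  qed
  interpret cs: chsum \<alpha> T N z
    by unfold_locales (use Npos NdvdT zT zhalf znot in auto)
  define Ai where "Ai i = (\<Sum>n<T. if n mod N = i \<and> slce \<alpha> n then z ^ n else 0)" for i
  have AiZ: "Ai i \<in> Zring k" for i
    unfolding Ai_def by (rule Zring_sum[OF kpos]) (auto intro: Zring_pow[OF kpos zZ] simp: Zring_of_int[OF kpos, of 0, simplified])
  have expr: "(\<Sum>j < N. inverse (zeta N) ^ (i * j) * eta \<alpha> N j (-1) * Ksum \<alpha> (\<lambda>x. eta \<alpha> N j x * chi \<alpha> z x))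
       - (- (of_nat N * (if (T div 2) mod N = i then 1 else 0))) = - (2 * of_nat N) * Ai i" if i: "i < N" for i
    unfolding cs.E_formula[OF i] cs.sum_split_rho[OF i] Ai_def by (simp add: algebra_simps)
  have mem: "- (2 * of_nat N) * Ai i \<in> gen_ideal (Zring L) ((\<lambda>x. 2 ^ (h + 1) * x) ` P) \<longleftrightarrow> Ai i \<in> P" for i
  proof
    assume "Ai i \<in> P"
    have "\<exists>(n::nat) (r::nat \<Rightarrow> complex) a. - (2 * of_nat N) * Ai i = (\<Sum>j<n. r j * a j) \<and> (\<forall>j<n. r j \<in> Zring L \<and> a j \<in> (\<lambda>x. 2 ^ (h + 1) * x) ` P)"
    proof (rule exI[where x="1::nat"], rule exI[where x="\<lambda>_. (-1::complex)"], rule exI[where x="\<lambda>_. 2 ^ (h + 1) * Ai i"], intro conjI allI impI)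
      show "- (2 * of_nat N) * Ai i = (\<Sum>j<(1::nat). (-1) * (2 ^ (h + 1) * Ai i))" unfolding N_def by (simp add: card_lessThan)
      show "(-1::complex) \<in> Zring L" using Zring_of_int[OF Lpos, of "-1"] by simp
      show "2 ^ (h + 1) * Ai i \<in> (\<lambda>x. 2 ^ (h + 1) * x) ` P" using \<open>Ai i \<in> P\<close> by (rule imageI)
    qed
    thus "- (2 * of_nat N) * Ai i \<in> gen_ideal (Zring L) ((\<lambda>x. 2 ^ (h + 1) * x) ` P)"
      unfolding gen_ideal_def by blast
  next
    assume "- (2 * of_nat N) * Ai i \<in> gen_ideal (Zring L) ((\<lambda>x. 2 ^ (h + 1) * x) ` P)"
    hence "\<exists>(n::nat) (r::nat \<Rightarrow> complex) (a::nat \<Rightarrow> complex). - (2 * of_nat N) * Ai i = (\<Sum>j<n. r j * a j) \<and> (\<forall>j<n. r j \<in> Zring L \<and> a j \<in> (\<lambda>x. 2 ^ (h + 1) * x) ` P)"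
      unfolding gen_ideal_def by (simp only: mem_Collect_eq)
    then obtain n :: nat and r a :: "nat \<Rightarrow> complex" where
      ra1: "- (2 * of_nat N) * Ai i = (\<Sum>j<n. r j * a j)" and ra2: "\<forall>j<n. r j \<in> Zring L \<and> a j \<in> (\<lambda>x. 2 ^ (h + 1) * x) ` P"
      by blast
    have ra: "- (2 * of_nat N) * Ai i = (\<Sum>j<n. r j * a j)" "\<And>j. j < n \<Longrightarrow> r j \<in> Zring L \<and> a j \<in> (\<lambda>x. 2 ^ (h + 1) * x) ` P"
      using ra1 ra2 by auto
    have "\<forall>j. \<exists>bb. j < n \<longrightarrow> bb \<in> P \<and> a j = 2 ^ (h + 1) * bb"
    proof
      fix j show "\<exists>bb. j < n \<longrightarrow> bb \<in> P \<and> a j = 2 ^ (h + 1) * bb"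
      proof (cases "j < n")
        case True
        then obtain bb where "bb \<in> P" "a j = 2 ^ (h + 1) * bb" using ra(2)[OF True] by (auto simp: image_iff)
        thus ?thesis by blast
      qed simp
    qed
    then obtain b where b0: "\<forall>j. j < n \<longrightarrow> b j \<in> P \<and> a j = 2 ^ (h + 1) * b j"
      by (rule choice[THEN exE])
    have b: "\<And>j. j < n \<Longrightarrow> b j \<in> P \<and> a j = 2 ^ (h + 1) * b j" using b0 by blast
    have c: "(2 * of_nat N :: complex) = 2 ^ (h + 1)" unfolding N_def by simp
    define K :: complex where "K = 2 ^ (h + 1)"
    have K0: "K \<noteq> 0" unfolding K_def by simp
    have s0: "r j * a j = K * (r j * b j)" if "j \<in> {..<n}" for j
    proof -
      have "a j = K * b j" using b[of j] that unfolding K_def by simp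
      thus ?thesis by (simp only: mult.left_commute)
    qed
    have s1: "(\<Sum>j<n. r j * a j) = K * (\<Sum>j<n. r j * b j)"
      unfolding sum_distrib_left by (rule sum.cong[OF refl s0])
    have "K * (- Ai i) = K * (\<Sum>j<n. r j * b j)"
      using ra(1) unfolding s1 c K_def[symmetric] by simp
    hence "- Ai i = (\<Sum>j<n. r j * b j)" by (rule mult_left_cancel[THEN iffD1, OF K0])
    hence e3: "Ai i = - (\<Sum>j<n. r j * b j)" by (metis minus_minus)
    have e4: "(\<Sum>j<n. (- r j) * b j) = - (\<Sum>j<n. r j * b j)" by (simp add: sum_negf)
    have "Ai i = (\<Sum>j<n. (- r j) * b j)" unfolding e4 by (rule e3)
    moreover have "(\<Sum>j<n. (- r j) * b j) \<in> gen_ideal (Zring L) P"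
    proof -
      have "\<exists>(n'::nat) (r'::nat\<Rightarrow>complex) a'. (\<Sum>j<n. (- r j) * b j) = (\<Sum>j<n'. r' j * a' j) \<and> (\<forall>j<n'. r' j \<in> Zring L \<and> a' j \<in> P)"
        by (rule exI[where x=n], rule exI[where x="\<lambda>j. - r j"], rule exI[where x=b])
           (use ra(2) b Zring_uminus[OF Lpos] in auto)
      thus ?thesis unfolding gen_ideal_def by blast
    qed
    ultimately have "Ai i \<in> gen_ideal (Zring L) P" by simp
    thus "Ai i \<in> P" by (rule contraction[OF kpos A(14) Lpos AiZ])
  qed
  have tA: "\<theta> (Ai i) = (\<Sum>n<T. if n mod N = i \<and> slce \<alpha> n then \<beta> ^ n else 0)" for i
    unfolding Ai_def
    by (subst hom_sum[OF kpos A(16) t0]) (auto intro!: sum.cong simp: tz t0 intro: Zring_pow[OF kpos zZ] Zring_of_int[OF kpos, of 0, simplified])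
  have lhs: "[:-\<beta>, 1:] ^ (2 ^ h) dvd (Spoly \<alpha> (CARD('a) - 1) :: 'b poly)
      \<longleftrightarrow> (\<forall>i<N. (\<Sum>n<T. if n mod N = i \<and> slce \<alpha> n then \<beta> ^ n else 0) = 0)"
  proof -
    have e1: "[:-\<beta>, 1:] ^ (2 ^ h) = monom 1 N - [:\<beta> ^ N:]" unfolding N_def by (rule frob_lin[OF A(9)])
    have e2: "(Spoly \<alpha> (CARD('a) - 1) :: 'b poly) = (\<Sum>n<T. if slce \<alpha> n then monom 1 n else 0)"
      unfolding Spoly_def T_def ..
    show ?thesis unfolding e1 e2 by (rule dvd_criterion[OF Npos b0])
  qed
  have key: "(\<Sum>n<T. if n mod N = i \<and> slce \<alpha> n then \<beta> ^ n else 0) = 0 \<longleftrightarrow> Ai i \<in> P" for i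
  proof -
    have "\<theta> (Ai i) = 0 \<longleftrightarrow> Ai i \<in> P" using A(19) AiZ[of i] by (rule bspec)
    thus ?thesis unfolding tA .
  qed
  have fin: "((\<Sum>j < 2 ^ h. inverse (zeta (2 ^ h)) ^ (i * j) * eta \<alpha> (2 ^ h) j (-1)
            * Ksum \<alpha> (\<lambda>x. eta \<alpha> (2 ^ h) j x * chi \<alpha> z x))
       - (- (2 ^ h * (if ((CARD('a) - 1) div 2) mod 2 ^ h = i then 1 else 0)))
       \<in> gen_ideal (Zring (2 ^ h * k)) ((\<lambda>x. 2 ^ (h + 1) * x) ` P)) \<longleftrightarrow> Ai i \<in> P" if i: "i < 2 ^ h" for i
  proof -
    have iN: "i < N" using i unfolding N_def .
    have "(\<Sum>j < 2 ^ h. inverse (zeta (2 ^ h)) ^ (i * j) * eta \<alpha> (2 ^ h) j (-1)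
            * Ksum \<alpha> (\<lambda>x. eta \<alpha> (2 ^ h) j x * chi \<alpha> z x))
       - (- (2 ^ h * (if ((CARD('a) - 1) div 2) mod 2 ^ h = i then 1 else 0))) = - (2 * of_nat N) * Ai i"
      using expr[OF iN] unfolding N_def T_def by simp
    thus ?thesis using mem[of i] unfolding L_def by simp
  qed
  show ?thesis
    unfolding lhs using key fin unfolding N_def by simp
qed

end
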